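(* Let $D$ be an $n\times n$ diagonal matrix with positive integer diagonal entries and let $O\in\mathrm U(n)$. Then $$\min_{\substack{V\in\mathrm U(n)\\ [V,D]=0}}\|O-V\|\le 2n\,\|[O,D]\|.$$
   Context: $[X,Y]=XY-YX$; $\|\cdot\|$ denotes the operator norm. *)

theory Defs
  imports "HOL-Analysis.Analysis"
begin

text \<open>Complex n x n matrices are modelled as complex ^'n ^'n (n = CARD('n)).
  The operator norm is the norm of the induced linear map on complex ^'n
  with its Euclidean norm.\<close>

definition adjoint_matrix :: "complex ^'n ^'n \<Rightarrow> complex ^'n ^'n" where
  "adjoint_matrix A = (\<chi> i j. cnj (A $ j $ i))"

definition unitary_matrix :: "complex ^'n ^'n \<Rightarrow> bool" where
  "unitary_matrix U \<longleftrightarrow> U ** adjoint_matrix U = mat 1 \<and> adjoint_matrix U ** U = mat 1"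

definition commutator :: "complex ^'n ^'n \<Rightarrow> complex ^'n ^'n \<Rightarrow> complex ^'n ^'n" where
  "commutator X Y = X ** Y - Y ** X"

definition op_norm :: "complex ^'n ^'n \<Rightarrow> real" where
  "op_norm A = onorm (\<lambda>x. A *v x)"

end

theory Submission
  imports Defs
begin

definition cinner :: "complex^'n \<Rightarrow> complex^'n \<Rightarrow> complex" where
  "cinner x y = (\<Sum>i\<in>UNIV. cnj (x$i) * y$i)"

lemma cinner_add_left: "cinner (x + y) z = cinner x z + cinner y z"
  by (simp add: cinner_def sum.distrib algebra_simps)
lemma cinner_add_right: "cinner x (y + z) = cinner x y + cinner x z"
  by (simp add: cinner_def sum.distrib algebra_simps)
lemma cinner_diff_left: "cinner (x - y) z = cinner x z - cinner y z"
  by (simp add: cinner_def sum_subtractf algebra_simps)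
lemma cinner_diff_right: "cinner x (y - z) = cinner x y - cinner x z"
  by (simp add: cinner_def sum_subtractf algebra_simps)
lemma cinner_scale_left: "cinner (c *s x) y = cnj c * cinner x y"
  by (simp add: cinner_def sum_distrib_left algebra_simps)
lemma cinner_scale_right: "cinner x (c *s y) = c * cinner x y"
  by (simp add: cinner_def sum_distrib_left algebra_simps)
lemma cinner_commute: "cinner y x = cnj (cinner x y)"
  by (simp add: cinner_def mult.commute)
lemma cinner_zero_left[simp]: "cinner 0 y = 0" by (simp add: cinner_def)
lemma cinner_zero_right[simp]: "cinner x 0 = 0" by (simp add: cinner_def)

lemma norm_vec_sq: "(norm (x::'a::real_normed_vector^'n))^2 = (\<Sum>i\<in>UNIV. (norm (x$i))^2)"
  by (simp add: norm_vec_def L2_set_def sum_nonneg)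

lemma cinner_self: "cinner x x = of_real ((norm x)^2)"
proof -
  have "cinner x x = (\<Sum>i\<in>UNIV. of_real ((cmod (x$i))^2))"
    unfolding cinner_def by (rule sum.cong) (auto simp: complex_norm_square mult.commute simp del: of_real_power)
  also have "\<dots> = of_real ((norm x)^2)" by (simp add: norm_vec_sq)
  finally show ?thesis .
qed

lemma re_cinner: "Re (cinner x y) = inner x y"
  by (simp add: cinner_def inner_vec_def inner_complex_def Re_sum)

lemma mult_scale: "(A::complex^'n^'n) *v (c *s x) = c *s (A *v x)"
  by (simp add: matrix_vector_mult_def vec_eq_iff sum_distrib_left algebra_simps)

lemma norm_scale: "norm (c *s (x::complex^'n)) = cmod c * norm x"
  by (simp add: norm_vec_def norm_mult L2_set_right_distrib)

lemma norm_cinner: "cmod (cinner x y) \<le> norm x * norm y"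
proof (cases "cinner x y = 0")
  case True then show ?thesis by simp
next
  case False
  define a where "a = cinner x y"
  define u where "u = cnj a / of_real (cmod a)"
  have cu: "cmod u = 1" using False by (simp add: u_def a_def norm_divide)
  have sq0: "a * cnj a = of_real (cmod a) * of_real (cmod a)"
    using complex_norm_square[of a] by (simp add: power2_eq_square)
  have sq: "cnj a * a = of_real (cmod a) * of_real (cmod a)"
    using sq0 by (simp only: mult.commute)
  have an: "a \<noteq> 0" using False by (simp add: a_def)
  have "u * a = (cnj a * a) / of_real (cmod a)" by (simp add: u_def)
  also have "\<dots> = of_real (cmod a)" using an by (simp only: sq) simp
  finally have "u * a = of_real (cmod a)" .
  then have "cmod a = Re (cinner x (u *s y))" by (simp add: cinner_scale_right a_def)
  also have "\<dots> = inner x (u *s y)" by (rule re_cinner)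
  also have "\<dots> \<le> norm x * norm (u *s y)" by (rule norm_cauchy_schwarz)
  also have "\<dots> = norm x * norm y" by (simp add: norm_scale cu)
  finally show ?thesis by (simp add: a_def)
qed

lemma cinner_adj: "cinner x (A *v y) = cinner (adjoint_matrix A *v x) y"
  unfolding cinner_def adjoint_matrix_def matrix_vector_mult_def
  by (simp add: sum_distrib_left sum_distrib_right algebra_simps) (rule sum.swap)

lemma adj_adj[simp]: "adjoint_matrix (adjoint_matrix A) = A"
  by (simp add: adjoint_matrix_def vec_eq_iff)
lemma adj_mult: "adjoint_matrix (A ** B) = adjoint_matrix B ** adjoint_matrix A"
  by (simp add: adjoint_matrix_def vec_eq_iff matrix_matrix_mult_def mult.commute)
lemma adj_one[simp]: "adjoint_matrix (mat 1) = (mat 1 :: complex^'n^'n)"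
  by (simp add: adjoint_matrix_def vec_eq_iff mat_def)

lemma unitary_adj: "unitary_matrix U \<Longrightarrow> unitary_matrix (adjoint_matrix U)"
  by (simp add: unitary_matrix_def)
lemma unitary_mult: "unitary_matrix U \<Longrightarrow> unitary_matrix V \<Longrightarrow> unitary_matrix (U ** V)"
  unfolding unitary_matrix_def adj_mult
  by (metis matrix_mul_assoc matrix_mul_rid)
lemma unitary_one: "unitary_matrix (mat 1 :: complex^'n^'n)"
  by (simp add: unitary_matrix_def)

lemma unitary_norm: assumes "unitary_matrix U" shows "norm (U *v x) = norm x"
proof -
  have "cinner (U *v x) (U *v x) = cinner x x"
    using assms by (simp add: cinner_adj matrix_vector_mul_assoc unitary_matrix_def)
  then have "(of_real ((norm (U *v x))^2) :: complex) = of_real ((norm x)^2)" by (simp only: cinner_self)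
  then have "(norm (U *v x))^2 = (norm x)^2" by (simp only: of_real_eq_iff)
  then show ?thesis by (simp add: power2_eq_iff_nonneg)
qed

lemma bl_mv: "bounded_linear (\<lambda>x. (A::complex^'n^'n) *v x)"
  by (simp add: linear_conv_bounded_linear)

lemma op_norm_bound: "norm (A *v x) \<le> op_norm A * norm x"
  unfolding op_norm_def by (rule onorm[OF bl_mv])

lemma op_norm_le: "(\<And>x. norm (A *v x) \<le> b * norm x) \<Longrightarrow> op_norm (A::complex^'n^'n) \<le> b"
  unfolding op_norm_def by (rule onorm_le)

lemma op_norm_nonneg: "0 \<le> op_norm (A::complex^'n^'n)"
  unfolding op_norm_def by (rule onorm_pos_le[OF bl_mv])

lemma op_norm_triangle: "op_norm ((A::complex^'n^'n) + B) \<le> op_norm A + op_norm B"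
proof (rule op_norm_le)
  fix x
  have "norm ((A + B) *v x) \<le> norm (A *v x) + norm (B *v x)"
    by (simp add: matrix_vector_mult_add_rdistrib norm_triangle_ineq)
  also have "\<dots> \<le> op_norm A * norm x + op_norm B * norm x"
    using op_norm_bound[of A x] op_norm_bound[of B x] by simp
  finally show "norm ((A + B) *v x) \<le> (op_norm A + op_norm B) * norm x" by (simp add: algebra_simps)
qed

lemma op_norm_le_norm: "op_norm (A::complex^'n^'n) \<le> norm A"
proof (rule op_norm_le)
  fix x :: "complex^'n"
  have row: "cmod ((A *v x)$i) \<le> norm (A$i) * norm x" for i
  proof -
    define r where "r = (\<chi> j. cnj (A$i$j))"
    have "(A *v x)$i = cinner r x"
      by (simp add: r_def cinner_def matrix_vector_mult_def)
    moreover have "norm r = norm (A$i)"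
      by (simp add: r_def norm_vec_def)
    ultimately show ?thesis using norm_cinner[of r x] by simp
  qed
  have "(norm (A *v x))^2 = (\<Sum>i\<in>UNIV. (cmod ((A *v x)$i))^2)" by (rule norm_vec_sq)
  also have "\<dots> \<le> (\<Sum>i\<in>UNIV. (norm (A$i) * norm x)^2)"
    by (rule sum_mono) (use row in \<open>auto intro: power_mono\<close>)
  also have "\<dots> = (norm A * norm x)^2"
    by (simp add: power_mult_distrib sum_distrib_right[symmetric] norm_vec_sq[of A])
  finally show "norm (A *v x) \<le> norm A * norm x"
    by (rule power2_le_imp_le) simp
qed

lemma op_norm_lip: "\<bar>op_norm (A::complex^'n^'n) - op_norm B\<bar> \<le> norm (A - B)"
proof -
  have "op_norm A \<le> op_norm B + op_norm (A - B)" using op_norm_triangle[of B "A - B"] by simp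
  moreover have "op_norm B \<le> op_norm A + op_norm (B - A)" using op_norm_triangle[of A "B - A"] by simp
  moreover have "op_norm (A - B) \<le> norm (A - B)" "op_norm (B - A) \<le> norm (A - B)"
    using op_norm_le_norm[of "A - B"] op_norm_le_norm[of "B - A"] by (auto simp: norm_minus_commute)
  ultimately show ?thesis by linarith
qed

lemma continuous_op_norm_diff: "continuous_on S (\<lambda>W. op_norm ((U::complex^'n^'n) - W))"
  unfolding continuous_on_iff
proof (intro ballI allI impI)
  fix x e assume "x \<in> S" "(0::real) < e"
  show "\<exists>d>0. \<forall>x'\<in>S. dist x' x < d \<longrightarrow> dist (op_norm (U - x')) (op_norm (U - x)) < e"
  proof (intro exI[of _ e] conjI ballI impI)
    fix x' assume "x' \<in> S" "dist x' x < e"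
    have "\<bar>op_norm (U - x') - op_norm (U - x)\<bar> \<le> norm ((U - x') - (U - x))" by (rule op_norm_lip)
    also have "\<dots> = dist x' x" by (simp add: dist_norm norm_minus_commute)
    finally show "dist (op_norm (U - x')) (op_norm (U - x)) < e"
      using \<open>dist x' x < e\<close> by (simp add: dist_real_def)
  qed (use \<open>0 < e\<close> in simp)
qed

definition bd :: "('n \<Rightarrow> complex) \<Rightarrow> complex^'n^'n \<Rightarrow> bool" where
  "bd d W \<longleftrightarrow> (\<forall>i j. d i \<noteq> d j \<longrightarrow> W$i$j = 0)"

definition blk :: "('n \<Rightarrow> complex) \<Rightarrow> complex \<Rightarrow> (complex^'n) set" where
  "blk d k = {x. \<forall>i. d i \<noteq> k \<longrightarrow> x$i = 0}"

definition outer :: "complex \<Rightarrow> complex^'n \<Rightarrow> complex^'n \<Rightarrow> complex^'n^'n" where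
  "outer c a b = (\<chi> i j. c * a$i * cnj (b$j))"

lemma matrix_add_rdistrib': "((A::complex^'n^'n) + B) ** C = A ** C + B ** C"
  by (simp add: matrix_matrix_mult_def vec_eq_iff sum.distrib distrib_right)

lemma bd_mult: "bd d A \<Longrightarrow> bd d B \<Longrightarrow> bd d (A ** B)"
  unfolding bd_def matrix_matrix_mult_def
  by (auto intro!: sum.neutral) (metis mult_zero_left mult_zero_right)

lemma bd_adj: "bd d A \<Longrightarrow> bd d (adjoint_matrix A)"
  unfolding bd_def adjoint_matrix_def by auto

lemma bd_one: "bd d (mat 1)"
  unfolding bd_def mat_def by auto

lemma bd_diff: "bd d A \<Longrightarrow> bd d B \<Longrightarrow> bd d (A - B)"
  unfolding bd_def by auto

lemma bd_add: "bd d A \<Longrightarrow> bd d B \<Longrightarrow> bd d (A + B)"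
  unfolding bd_def by auto

lemma bd_outer: "x \<in> blk d k \<Longrightarrow> bd d (outer c x x)"
  unfolding bd_def blk_def outer_def by auto (metis mult_zero_left mult_zero_right complex_cnj_zero)

lemma bd_blk: "bd d A \<Longrightarrow> x \<in> blk d k \<Longrightarrow> A *v x \<in> blk d k"
  unfolding bd_def blk_def matrix_vector_mult_def
  by (auto intro!: sum.neutral) (metis mult_zero_left mult_zero_right)

lemma blk_add: "x \<in> blk d k \<Longrightarrow> y \<in> blk d k \<Longrightarrow> x + y \<in> blk d k"
  unfolding blk_def by auto
lemma blk_diff: "x \<in> blk d k \<Longrightarrow> y \<in> blk d k \<Longrightarrow> x - y \<in> blk d k"
  unfolding blk_def by auto
lemma blk_scaleR: "x \<in> blk d k \<Longrightarrow> c *\<^sub>R x \<in> blk d k"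
  unfolding blk_def by auto
lemma blk_scale: "x \<in> blk d k \<Longrightarrow> c *s x \<in> blk d k"
  unfolding blk_def by auto

lemma adj_add: "adjoint_matrix (A + B) = adjoint_matrix A + adjoint_matrix B"
  by (simp add: adjoint_matrix_def vec_eq_iff)

lemma adj_outer: "adjoint_matrix (outer c a b) = outer (cnj c) b a"
  by (simp add: adjoint_matrix_def outer_def vec_eq_iff mult.commute mult.left_commute)

lemma outer_mult: "outer c a b ** outer c' a' b' = outer (c * c' * cinner b a') a b'"
  by (simp add: outer_def matrix_matrix_mult_def cinner_def vec_eq_iff sum_distrib_left
      sum_distrib_right mult_ac)

lemma outer_add: "outer c a b + outer c' a b = outer (c + c') a b"
  by (simp add: outer_def vec_eq_iff algebra_simps)

lemma outer_zero: "outer 0 a b = 0"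
  by (simp add: outer_def vec_eq_iff)

lemma mult_outer: "W ** outer c a b = outer c (W *v a) b"
  by (simp add: outer_def matrix_matrix_mult_def matrix_vector_mult_def vec_eq_iff
      sum_distrib_left sum_distrib_right mult_ac)

lemma unitary_pert:
  assumes "x \<noteq> 0" "cmod w = 1"
  defines "c \<equiv> (w - 1) / of_real ((norm x)^2)"
  shows "unitary_matrix (mat 1 + outer c x x)"
proof -
  have nx: "(norm x)^2 \<noteq> 0" using assms by simp
  have key: "c + cnj c + c * cnj c * cinner x x = 0"
  proof -
    have "w * cnj w = 1" using assms(2)
      by (metis complex_norm_square mult.commute of_real_1 one_power2)
    then show ?thesis using nx unfolding c_def cinner_self
      by (simp add: field_simps power2_eq_square)
  qed
  have k2: "cnj c + c + cnj c * c * cinner x x = 0"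
    using key by (simp add: algebra_simps)
  show ?thesis unfolding unitary_matrix_def
    by (simp add: adj_add adj_outer matrix_add_ldistrib matrix_add_rdistrib' outer_mult outer_add
        add.assoc key[unfolded add.assoc] k2[unfolded add.assoc] outer_zero)
qed

lemma complex_maxcond:
  assumes "\<And>w. cmod w = 1 \<Longrightarrow> Re (cnj (w - 1) * z) \<le> 0"
  shows "Im z = 0 \<and> 0 \<le> Re z"
proof
  have "Re (cnj (-1 - 1) * z) \<le> 0" by (rule assms) simp
  then show "0 \<le> Re z" by simp
  have t: "t * Im z \<le> t^2 * Re z" for t :: real
  proof -
    define a where "a = (1 - t^2) / (1 + t^2)"
    define b where "b = 2 * t / (1 + t^2)"
    have pos: "1 + t^2 > 0" by (simp add: add_pos_nonneg)
    have e: "(1 - t^2)^2 + (2*t)^2 = (1 + t^2)^2" by algebra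
    have "a^2 + b^2 = ((1 - t^2)^2 + (2*t)^2) / (1 + t^2)^2" unfolding a_def b_def
      by (simp add: power_divide add_divide_distrib)
    then have "a^2 + b^2 = 1" using e pos by simp
    then have "cmod (Complex a b) = 1" by (simp add: cmod_def)
    then have "Re (cnj (Complex a b - 1) * z) \<le> 0" by (rule assms)
    then have "(a - 1) * Re z + b * Im z \<le> 0" by simp
    moreover have "a - 1 = - 2 * t^2 / (1 + t^2)" unfolding a_def using pos by (simp add: field_simps)
    moreover have "b * Im z = 2 * t * Im z / (1 + t^2)" unfolding b_def by simp
    ultimately have "(- 2 * t^2 * Re z) / (1 + t^2) + 2 * t * Im z / (1 + t^2) \<le> 0"
      by simp
    then have h: "2 * t * Im z / (1 + t^2) \<le> 2 * t^2 * Re z / (1 + t^2)"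
      by simp
    have "2 * t * Im z \<le> 2 * t^2 * Re z" using divide_le_cancel[of "2 * t * Im z" "1 + t^2" "2 * t^2 * Re z"] h pos by simp
    then show ?thesis by simp
  qed
  show "Im z = 0"
  proof (rule ccontr)
    assume nz: "Im z \<noteq> 0"
    define R where "R = Re z"
    have R0: "0 \<le> R" using \<open>0 \<le> Re z\<close> by (simp add: R_def)
    define p where "p = R + 1"
    have p0: "p > 0" using R0 by (simp add: p_def)
    define t where "t = Im z / p"
    have le: "t * Im z \<le> t^2 * R" using t[of t] by (simp add: R_def)
    have tI: "t * Im z = (Im z)^2 / p" by (simp add: t_def power2_eq_square)
    have tIp: "t * Im z > 0" using nz p0 by (simp add: tI)
    have eq: "t^2 * R = (t * Im z) * (R / p)" by (simp add: t_def power2_eq_square)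
    have "R / p < 1" using p0 by (simp add: p_def)
    then have "(t * Im z) * (R / p) < t * Im z" using tIp
      by (metis mult.right_neutral mult_strict_left_mono)
    then show False using le eq by simp
  qed
qed

lemma core_spectral:
  fixes p :: "'a::euclidean_space \<Rightarrow> 'a" and S :: "'a set"
  assumes lin: "linear p"
    and Sadd: "\<And>x y. x \<in> S \<Longrightarrow> y \<in> S \<Longrightarrow> x + y \<in> S"
    and Sscale: "\<And>x c. x \<in> S \<Longrightarrow> c *\<^sub>R x \<in> S"
    and Sclosed: "closed S"
    and pS: "\<And>x. x \<in> S \<Longrightarrow> p x \<in> S"
    and sym: "\<And>x y. x \<in> S \<Longrightarrow> y \<in> S \<Longrightarrow> inner x (p y) = inner y (p x)"
    and pos: "\<And>x. x \<in> S \<Longrightarrow> 0 \<le> inner x (p x)"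
    and up: "\<And>x. x \<in> S \<Longrightarrow> norm (p x) \<le> (1 + e) * norm x"
    and lo: "\<And>x. x \<in> S \<Longrightarrow> (1 - e) * norm x \<le> norm (p x)"
    and xS: "x \<in> S"
  shows "norm (p x - x) \<le> e * norm x"
proof -
  have Sdiff: "u - a *\<^sub>R v \<in> S" if "u \<in> S" "v \<in> S" for u v a
    using Sadd[OF that(1) Sscale[OF that(2), of "-a"]] by simp
  have expand: "inner (u - a *\<^sub>R v) (p (u - a *\<^sub>R v)) =
      inner u (p u) - 2 * a * inner v (p u) + a^2 * inner v (p v)" if "u \<in> S" "v \<in> S" for u v a
    using sym[OF that]
    by (simp add: real_vector.linear_diff[OF lin] linear_cmul[OF lin] inner_diff_left inner_diff_right
        algebra_simps power2_eq_square)
  have expandn: "(norm (u - a *\<^sub>R v))^2 = (norm u)^2 - 2 * a * inner v u + a^2 * (norm v)^2" for u v :: 'a and a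
    unfolding power2_norm_eq_inner
    by (simp add: inner_diff_left inner_diff_right inner_commute algebra_simps power2_eq_square)
  have lower: "(1 - e) * (norm y)^2 \<le> inner y (p y)" if yS: "y \<in> S" for y
  proof (cases "y = 0")
    case True then show ?thesis by (simp add: linear_0[OF lin])
  next
    case False
    define T where "T = S \<inter> sphere 0 1"
    have cT: "compact T" unfolding T_def by (rule closed_Int_compact[OF Sclosed compact_sphere])
    have yT: "(1 / norm y) *\<^sub>R y \<in> T" using False Sscale[OF yS] by (simp add: T_def)
    have cont: "continuous_on T (\<lambda>x. inner x (p x))"
      using lin by (intro continuous_intros linear_continuous_on) (simp add: linear_conv_bounded_linear)
    obtain x0 where x0T: "x0 \<in> T" and x0min: "\<And>y. y \<in> T \<Longrightarrow> inner x0 (p x0) \<le> inner y (p y)"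
      using continuous_attains_inf[OF cT _ cont] yT by blast
    define s where "s = inner x0 (p x0)"
    have x0S: "x0 \<in> S" and nx0: "norm x0 = 1" using x0T by (auto simp: T_def)
    have F: "s * (norm w)^2 \<le> inner w (p w)" if wS: "w \<in> S" for w
    proof (cases "w = 0")
      case True then show ?thesis by (simp add: linear_0[OF lin])
    next
      case False
      have "(1 / norm w) *\<^sub>R w \<in> T" using False Sscale[OF wS] by (simp add: T_def)
      then have "s \<le> inner ((1 / norm w) *\<^sub>R w) (p ((1 / norm w) *\<^sub>R w))"
        unfolding s_def by (rule x0min)
      also have "\<dots> = inner w (p w) / (norm w)^2"
        by (simp add: linear_cmul[OF lin] power2_eq_square)
      finally show ?thesis using False by (simp add: field_simps)
    qed
    define z where "z = p x0 - s *\<^sub>R x0"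
    have zS: "z \<in> S" unfolding z_def by (rule Sdiff[OF pS[OF x0S] x0S])
    have z0: "z = 0"
    proof (rule ccontr)
      assume "z \<noteq> 0"
      define N where "N = (norm z)^2"
      have N0: "N > 0" using \<open>z \<noteq> 0\<close> by (simp add: N_def)
      define K where "K = inner z (p z) - s * (norm z)^2"
      have K0: "K \<ge> 0" using F[OF zS] by (simp add: K_def)
      have zz: "inner z (p x0) - s * inner z x0 = N"
        by (simp add: N_def z_def power2_norm_eq_inner inner_diff_left inner_diff_right inner_commute algebra_simps)
      have G: "inner (x0 - t *\<^sub>R z) (p (x0 - t *\<^sub>R z)) - s * (norm (x0 - t *\<^sub>R z))^2
          = - 2 * t * N + t^2 * K" for t
      proof -
        have "inner (x0 - t *\<^sub>R z) (p (x0 - t *\<^sub>R z)) - s * (norm (x0 - t *\<^sub>R z))^2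
          = (s - 2 * t * inner z (p x0) + t^2 * inner z (p z)) - s * (1 - 2 * t * inner z x0 + t^2 * (norm z)^2)"
          using expand[OF x0S zS, of t] expandn[of x0 t z] nx0 by (simp add: s_def)
        also have "\<dots> = - 2 * t * (inner z (p x0) - s * inner z x0) + t^2 * K"
          by (simp add: K_def algebra_simps)
        finally show ?thesis using zz by simp
      qed
      define t where "t = N / (K + 1)"
      have t0: "t > 0" using N0 K0 by (simp add: t_def)
      have "t * K < N"
      proof -
        have "t * K = N * (K / (K + 1))" by (simp add: t_def)
        also have "\<dots> < N * 1" using N0 K0 by (intro mult_strict_left_mono) auto
        finally show ?thesis by simp
      qed
      then have "t * (t * K) < t * N" using t0 by simp
      then have "- 2 * t * N + t^2 * K < 0" using t0 N0 by (simp add: power2_eq_square algebra_simps)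
      moreover have "s * (norm (x0 - t *\<^sub>R z))^2 \<le> inner (x0 - t *\<^sub>R z) (p (x0 - t *\<^sub>R z))"
        by (rule F[OF Sdiff[OF x0S zS]])
      ultimately show False using G[of t] by simp
    qed
    then have px0: "p x0 = s *\<^sub>R x0" by (simp add: z_def)
    have s0: "s \<ge> 0" unfolding s_def by (rule pos[OF x0S])
    have "norm (p x0) = s" using px0 nx0 s0 by simp
    then have "1 - e \<le> s" using lo[OF x0S] nx0 by simp
    then have "(1 - e) * (norm y)^2 \<le> s * (norm y)^2" by (simp add: mult_right_mono)
    also have "\<dots> \<le> inner y (p y)" by (rule F[OF yS])
    finally show ?thesis .
  qed
  have upper: "inner y (p y) \<le> (1 + e) * (norm y)^2" if yS: "y \<in> S" for y
  proof -
    have "inner y (p y) \<le> norm y * norm (p y)" by (rule norm_cauchy_schwarz)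
    also have "\<dots> \<le> norm y * ((1 + e) * norm y)" by (rule mult_left_mono[OF up[OF yS]]) simp
    finally show ?thesis by (simp add: power2_eq_square algebra_simps)
  qed
  define q where "q = (\<lambda>y. p y - y)"
  have qbound: "\<bar>inner y (q y)\<bar> \<le> e * (norm y)^2" if "y \<in> S" for y
    using lower[OF that] upper[OF that]
    by (simp add: q_def inner_diff_right power2_norm_eq_inner[symmetric] algebra_simps abs_le_iff)
  define y where "y = q x"
  have yS: "y \<in> S" unfolding y_def q_def using Sdiff[OF pS[OF xS] xS, of 1] by simp
  have qexp: "inner (x - a *\<^sub>R y) (q (x - a *\<^sub>R y)) = inner x (q x) - 2 * a * inner y (q x) + a^2 * inner y (q y)" for a
  proof -
    have h1: "inner (x - a *\<^sub>R y) (q (x - a *\<^sub>R y)) = inner (x - a *\<^sub>R y) (p (x - a *\<^sub>R y)) - (norm (x - a *\<^sub>R y))^2"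
      by (simp add: q_def inner_diff_right power2_norm_eq_inner)
    have h2: "inner x (q x) = inner x (p x) - (norm x)^2"
      by (simp add: q_def inner_diff_right power2_norm_eq_inner)
    have h3: "inner y (q x) = inner y (p x) - inner y x"
      by (simp add: q_def inner_diff_right)
    have h4: "inner y (q y) = inner y (p y) - (norm y)^2"
      by (simp add: q_def inner_diff_right power2_norm_eq_inner)
    show ?thesis unfolding h1 h2 h3 h4 expand[OF xS yS] expandn by algebra
  qed
  have key: "4 * a * (norm y)^2 \<le> 2 * e * ((norm x)^2 + a^2 * (norm y)^2)" for a
  proof -
    have yy: "inner y (q x) = (norm y)^2" by (simp add: y_def power2_norm_eq_inner)
    have A: "inner (x - (-a) *\<^sub>R y) (q (x - (-a) *\<^sub>R y)) \<le> e * (norm (x - (-a) *\<^sub>R y))^2"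
      using qbound[OF Sdiff[OF xS yS, of "-a"]] by (simp add: abs_le_iff)
    have B: "- inner (x - a *\<^sub>R y) (q (x - a *\<^sub>R y)) \<le> e * (norm (x - a *\<^sub>R y))^2"
      using qbound[OF Sdiff[OF xS yS, of a]] by (simp add: abs_le_iff)
    have "4 * a * (norm y)^2 = inner (x - (-a) *\<^sub>R y) (q (x - (-a) *\<^sub>R y)) - inner (x - a *\<^sub>R y) (q (x - a *\<^sub>R y))"
      using qexp[of a] qexp[of "-a"] yy by simp
    also have "\<dots> \<le> e * (norm (x - (-a) *\<^sub>R y))^2 + e * (norm (x - a *\<^sub>R y))^2" using A B by simp
    also have "\<dots> = 2 * e * ((norm x)^2 + a^2 * (norm y)^2)"
      unfolding expandn by algebra
    finally show ?thesis .
  qed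
  show ?thesis
  proof (cases "y = 0 \<or> x = 0")
    case True
    then show ?thesis
    proof
      assume "y = 0"
      then have "p x = x" by (simp add: y_def q_def)
      then have "norm x \<le> (1 + e) * norm x" using up[OF xS] by simp
      then have "0 \<le> e * norm x" by (simp add: algebra_simps)
      then show ?thesis using \<open>y = 0\<close> by (simp add: y_def q_def)
    qed (simp add: linear_0[OF lin])
  next
    case False
    then have ny: "norm y > 0" and nx: "norm x > 0" by auto
    define a where "a = norm x / norm y"
    have kk: "4 * a * (norm y)^2 \<le> 2 * e * ((norm x)^2 + a^2 * (norm y)^2)" by (rule key)
    have m1: "a * (norm y)^2 = norm x * norm y" using ny by (simp add: a_def power2_eq_square)
    have m2: "a^2 * (norm y)^2 = (norm x)^2" using ny by (simp add: a_def power2_eq_square)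
    have k1: "4 * a * (norm y)^2 = 4 * (norm x * norm y)" using m1 by simp
    have k2: "2 * e * ((norm x)^2 + a^2 * (norm y)^2) = 4 * e * (norm x * norm x)"
      using m2 by (simp add: power2_eq_square)
    have "4 * (norm x * norm y) \<le> 4 * e * (norm x * norm x)" using kk k1 k2 by linarith
    then have "norm x * norm y \<le> norm x * (e * norm x)" by (simp add: algebra_simps)
    then have "norm y \<le> e * norm x" using nx by simp
    then show ?thesis by (simp add: y_def q_def)
  qed
qed

definition Bm :: "('n \<Rightarrow> complex) \<Rightarrow> complex^'n^'n \<Rightarrow> complex^'n^'n" where
  "Bm d U = (\<chi> i j. if d i = d j then U$i$j else 0)"

definition gs :: "complex^'n^'n \<Rightarrow> complex^'n^'n \<Rightarrow> complex" where
  "gs U W = (\<Sum>i\<in>UNIV. \<Sum>j\<in>UNIV. cnj (W$i$j) * U$i$j)"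

lemma bd_Bm: "bd d (Bm d U)"
  by (simp add: bd_def Bm_def)

lemma gs_add: "gs U (A + B) = gs U A + gs U B"
  by (simp add: gs_def sum.distrib algebra_simps)

lemma gs_outer: "gs U (outer c a b) = cnj c * cinner a (U *v b)"
  by (simp add: gs_def outer_def cinner_def matrix_vector_mult_def sum_distrib_left mult_ac)

lemma mult_pert: "W ** (mat 1 + outer c x x) = W + outer c (W *v x) x"
  by (simp add: matrix_add_ldistrib mult_outer)

lemma orth_E:
  assumes "x \<in> blk d k" "bd d W"
  shows "cinner (W *v x) ((U - Bm d U) *v x) = 0"
proof -
  have wx: "W *v x \<in> blk d k" by (rule bd_blk[OF assms(2,1)])
  have v0: "((U - Bm d U) *v x)$i = 0" if "d i = k" for i
    unfolding matrix_vector_mult_def using assms(1) that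
    by (auto simp: Bm_def blk_def intro!: sum.neutral)
  show ?thesis unfolding cinner_def
  proof (rule sum.neutral, rule ballI)
    fix i
    show "cnj ((W *v x) $ i) * ((U - Bm d U) *v x) $ i = 0"
    proof (cases "d i = k")
      case True then show ?thesis using v0 by simp
    next
      case False then show ?thesis using wx by (simp add: blk_def)
    qed
  qed
qed

lemma herm_from_real:
  assumes im: "\<And>z. z \<in> S \<Longrightarrow> Im (cinner z (M *v z)) = 0"
    and S: "x \<in> S" "y \<in> S" "x + y \<in> S" "x + \<i> *s y \<in> S"
  shows "Re (cinner x (M *v y)) = Re (cinner y (M *v x))"
proof -
  have e1: "cinner (x + \<i> *s y) (M *v (x + \<i> *s y)) =
      cinner x (M *v x) + \<i> * cinner x (M *v y) - \<i> * cinner y (M *v x) + cinner y (M *v y)"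
    by (simp add: matrix_vector_right_distrib mult_scale cinner_add_left cinner_add_right
        cinner_scale_left cinner_scale_right algebra_simps)
  have "Im (cinner (x + \<i> *s y) (M *v (x + \<i> *s y))) = 0" by (rule im[OF S(4)])
  then show ?thesis using im[OF S(1)] im[OF S(2)] unfolding e1 by simp
qed

lemma unitary_row_norm:
  assumes "unitary_matrix W" shows "norm (W$i) = 1"
proof -
  have "(W ** adjoint_matrix W)$i$i = 1" using assms by (simp add: unitary_matrix_def mat_def)
  moreover have "(W ** adjoint_matrix W)$i$i = cinner (W$i) (W$i)"
    by (simp add: matrix_matrix_mult_def adjoint_matrix_def cinner_def mult.commute)
  ultimately have "(of_real ((norm (W$i))^2) :: complex) = 1" by (simp only: cinner_self)
  then have "(norm (W$i))^2 = 1" by (simp only: of_real_eq_1_iff)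
  then show ?thesis by (metis norm_ge_zero real_sqrt_one real_sqrt_unique)
qed

lemma unitary_norm_bound:
  assumes "unitary_matrix (W::complex^'n^'n)" shows "norm W = sqrt (real CARD('n))"
proof -
  have "(norm W)^2 = real CARD('n)" using unitary_row_norm[OF assms] by (simp add: norm_vec_sq)
  then show ?thesis by (metis norm_ge_zero real_sqrt_unique)
qed

lemma closed_unitary: "closed {W::complex^'n^'n. unitary_matrix W}"
proof -
  have c1: "continuous_on UNIV (\<lambda>W::complex^'n^'n. W ** adjoint_matrix W)"
    unfolding matrix_matrix_mult_def adjoint_matrix_def by (intro continuous_intros)
  have c2: "continuous_on UNIV (\<lambda>W::complex^'n^'n. adjoint_matrix W ** W)"
    unfolding matrix_matrix_mult_def adjoint_matrix_def by (intro continuous_intros)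
  show ?thesis unfolding unitary_matrix_def
    by (intro closed_Collect_conj closed_Collect_eq c1 c2 continuous_on_const)
qed

lemma closed_bd: "closed {W::complex^'n^'n. bd d W}"
proof -
  have "{W::complex^'n^'n. bd d W} = {W. \<forall>i j. (if d i = d j then 0 else W$i$j) = 0}"
    by (auto simp: bd_def)
  also have "closed \<dots>"
  proof (intro closed_Collect_all closed_Collect_eq continuous_on_const)
    fix i j
    show "continuous_on UNIV (\<lambda>W::complex^'n^'n. if d i = d j then 0 else W$i$j)"
      by (cases "d i = d j") (simp_all add: continuous_on_component continuous_on_id)
  qed
  finally show ?thesis .
qed

lemma closed_blk: "closed (blk d k)"
proof -
  have "blk d k = {x. \<forall>i. (if d i = k then 0 else x$i) = 0}"
    by (auto simp: blk_def)
  also have "closed \<dots>"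
  proof (intro closed_Collect_all closed_Collect_eq continuous_on_const)
    fix i
    show "continuous_on UNIV (\<lambda>x. if d i = k then 0 else x$i)"
      by (cases "d i = k") (simp_all add: continuous_on_component continuous_on_id)
  qed
  finally show ?thesis .
qed

lemma compact_G: "compact {W::complex^'n^'n. unitary_matrix W \<and> bd d W}"
proof -
  have "closed {W::complex^'n^'n. unitary_matrix W \<and> bd d W}"
    using closed_Int[OF closed_unitary closed_bd[of d]] by (simp add: Collect_conj_eq)
  moreover have "bounded {W::complex^'n^'n. unitary_matrix W \<and> bd d W}"
    unfolding bounded_iff using unitary_norm_bound by fastforce
  ultimately show ?thesis by (simp add: compact_eq_bounded_closed)
qed

definition proj :: "('n \<Rightarrow> complex) \<Rightarrow> complex \<Rightarrow> complex^'n \<Rightarrow> complex^'n" where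
  "proj d k x = (\<chi> i. if d i = k then x$i else 0)"

lemma proj_blk: "proj d k x \<in> blk d k"
  by (simp add: proj_def blk_def)

lemma glue:
  fixes H :: "complex^'n^'n"
  assumes bdH: "bd d H"
    and loc: "\<And>k x. x \<in> blk d k \<Longrightarrow> norm (H *v x) \<le> e * norm x"
    and e0: "0 \<le> e"
  shows "norm (H *v x) \<le> e * norm x"
proof -
  have comp: "(H *v x)$i = (H *v proj d (d i) x)$i" for i
    unfolding matrix_vector_mult_def proj_def
    using bdH by (auto simp: bd_def intro!: sum.cong)
  have van: "(H *v proj d k x)$i = 0" if "d i \<noteq> k" for i k
    using bd_blk[OF bdH proj_blk[of d k x]] that by (simp add: blk_def)
  have pn: "(norm (proj d k x))^2 = (\<Sum>i\<in>{i. d i = k}. (cmod (x$i))^2)" for k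
  proof -
    have "(norm (proj d k x))^2 = (\<Sum>i\<in>UNIV. if d i = k then (cmod (x$i))^2 else 0)"
      unfolding norm_vec_sq by (rule sum.cong) (auto simp: proj_def)
    also have "\<dots> = (\<Sum>i\<in>{i \<in> UNIV. d i = k}. (cmod (x$i))^2)"
      by (simp add: sum.If_cases)
    finally show ?thesis by simp
  qed
  have fin: "finite (d ` UNIV)" by simp
  have "(norm (H *v x))^2 = (\<Sum>i\<in>UNIV. (cmod ((H *v proj d (d i) x)$i))^2)"
    by (simp add: norm_vec_sq comp[symmetric])
  also have "\<dots> = (\<Sum>k\<in>d ` UNIV. \<Sum>i\<in>{i. i \<in> UNIV \<and> d i = k}. (cmod ((H *v proj d (d i) x)$i))^2)"
    by (rule sum.group[symmetric]) auto
  also have "\<dots> = (\<Sum>k\<in>d ` UNIV. \<Sum>i\<in>{i. d i = k}. (cmod ((H *v proj d k x)$i))^2)"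
    by (rule sum.cong) auto
  also have "\<dots> = (\<Sum>k\<in>d ` UNIV. (norm (H *v proj d k x))^2)"
    unfolding norm_vec_sq
    by (rule sum.cong[OF refl], rule sum.mono_neutral_left) (auto simp: van)
  also have "\<dots> \<le> (\<Sum>k\<in>d ` UNIV. (e * norm (proj d k x))^2)"
    by (rule sum_mono, rule power_mono[OF loc[OF proj_blk]]) simp
  also have "\<dots> = e^2 * (\<Sum>k\<in>d ` UNIV. \<Sum>i\<in>{i. i \<in> UNIV \<and> d i = k}. (cmod (x$i))^2)"
    by (simp add: power_mult_distrib pn sum_distrib_left)
  also have "\<dots> = e^2 * (\<Sum>i\<in>UNIV. (cmod (x$i))^2)"
    by (subst sum.group) auto
  also have "\<dots> = (e * norm x)^2" by (simp add: norm_vec_sq power_mult_distrib)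
  finally show ?thesis
    by (rule power2_le_imp_le) (simp add: e0)
qed

lemma comm_entry:
  assumes diag: "\<And>i j. i \<noteq> j \<Longrightarrow> D $ i $ j = 0"
  shows "(commutator W D)$i$j = W$i$j * (D$j$j - D$i$i)"
proof -
  have a: "(W ** D)$i$j = W$i$j * D$j$j"
  proof -
    have "(W ** D)$i$j = (\<Sum>k\<in>UNIV. W$i$k * D$k$j)" by (simp add: matrix_matrix_mult_def)
    also have "\<dots> = (\<Sum>k\<in>UNIV. if k = j then W$i$j * D$j$j else 0)"
      by (rule sum.cong) (auto simp: diag)
    also have "\<dots> = W$i$j * D$j$j" by simp
    finally show ?thesis .
  qed
  have b: "(D ** W)$i$j = D$i$i * W$i$j"
  proof -
    have "(D ** W)$i$j = (\<Sum>k\<in>UNIV. D$i$k * W$k$j)" by (simp add: matrix_matrix_mult_def)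
    also have "\<dots> = (\<Sum>k\<in>UNIV. if k = i then D$i$i * W$i$j else 0)"
      by (rule sum.cong) (auto simp: diag)
    also have "\<dots> = D$i$i * W$i$j" by simp
    finally show ?thesis .
  qed
  show ?thesis by (simp add: commutator_def a b algebra_simps)
qed

lemma comm_zero_iff:
  assumes diag: "\<And>i j. i \<noteq> j \<Longrightarrow> D $ i $ j = 0"
  shows "commutator W D = 0 \<longleftrightarrow> bd (\<lambda>i. D$i$i) W"
proof -
  have "commutator W D = 0 \<longleftrightarrow> (\<forall>i j. W$i$j * (D$j$j - D$i$i) = 0)"
    by (simp add: vec_eq_iff comm_entry[OF diag])
  also have "\<dots> \<longleftrightarrow> bd (\<lambda>i. D$i$i) W"
    unfolding bd_def by (metis (no_types, lifting) eq_iff_diff_eq_0 mult_eq_0_iff)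
  finally show ?thesis .
qed

lemma norm_axis_c: "norm (axis j (1::complex) :: complex^'n) = 1"
proof -
  have "(norm (axis j (1::complex) :: complex^'n))^2 = 1"
  proof -
    have "(\<Sum>i\<in>UNIV. (cmod ((axis j (1::complex) :: complex^'n) $ i))^2) = (\<Sum>i\<in>UNIV. if i = j then 1 else 0)"
      by (rule sum.cong) (auto simp: axis_def)
    then show ?thesis by (simp add: norm_vec_sq)
  qed
  then show ?thesis by (metis norm_ge_zero real_sqrt_one real_sqrt_unique)
qed

lemma entry_le_op_norm: "cmod (A$i$j) \<le> op_norm (A::complex^'n^'n)"
proof -
  have "(A *v axis j 1)$i = (\<Sum>k\<in>UNIV. if k = j then A$i$j else 0)"
    unfolding matrix_vector_mult_def vec_lambda_beta by (rule sum.cong) (auto simp: axis_def)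
  then have "A$i$j = (A *v axis j 1)$i" by simp
  then have "cmod (A$i$j) \<le> norm (A *v axis j 1)" using Finite_Cartesian_Product.norm_nth_le[of "A *v axis j 1" i] by simp
  also have "\<dots> \<le> op_norm A * norm (axis j (1::complex) :: complex^'n)" by (rule op_norm_bound)
  finally show ?thesis by (simp add: norm_axis_c)
qed

lemma E_bound:
  fixes D U :: "complex^'n^'n"
  assumes diag: "\<And>i j. i \<noteq> j \<Longrightarrow> D $ i $ j = 0"
    and posint: "\<And>i. \<exists>k::nat. k > 0 \<and> D $ i $ i = of_nat k"
  shows "norm ((U - Bm (\<lambda>i. D$i$i) U) *v x) \<le> (real CARD('n) * op_norm (commutator U D)) * norm x"
proof -
  define c where "c = op_norm (commutator U D)"
  define E where "E = U - Bm (\<lambda>i. D$i$i) U"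
  have c0: "0 \<le> c" by (simp add: c_def op_norm_nonneg)
  have Ee: "cmod (E$i$j) \<le> c" for i j
  proof (cases "D$i$i = D$j$j")
    case True then show ?thesis by (simp add: E_def Bm_def c0)
  next
    case False
    obtain a where a: "D$i$i = of_nat a" using posint by blast
    obtain b where b: "D$j$j = of_nat b" using posint by blast
    have "a \<noteq> b" using False a b by auto
    then have "1 \<le> \<bar>real b - real a\<bar>" by linarith
    moreover have "D$j$j - D$i$i = of_real (real b - real a)" using a b by simp
    ultimately have ge1: "1 \<le> cmod (D$j$j - D$i$i)" by (simp only: norm_of_real)
    have "cmod (E$i$j) = cmod (U$i$j)" using False by (simp add: E_def Bm_def)
    also have "\<dots> \<le> cmod (U$i$j) * cmod (D$j$j - D$i$i)"
      using ge1 by (metis mult.right_neutral mult_left_mono norm_ge_zero)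
    also have "\<dots> = cmod ((commutator U D)$i$j)" by (simp add: comm_entry[OF diag] norm_mult)
    also have "\<dots> \<le> c" unfolding c_def by (rule entry_le_op_norm)
    finally show ?thesis .
  qed
  have "(norm E)^2 = (\<Sum>i\<in>UNIV. \<Sum>j\<in>UNIV. (cmod (E$i$j))^2)" by (simp add: norm_vec_sq)
  also have "\<dots> \<le> (\<Sum>i\<in>(UNIV::'n set). \<Sum>j\<in>(UNIV::'n set). c^2)"
    by (intro sum_mono power_mono Ee) simp
  also have "\<dots> = (real CARD('n) * c)^2" by (simp add: power2_eq_square)
  finally have "norm E \<le> real CARD('n) * c" by (rule power2_le_imp_le) (simp add: c0)
  moreover have "norm (E *v x) \<le> norm E * norm x"
    using op_norm_bound[of E x] op_norm_le_norm[of E] by (meson mult_right_mono norm_ge_zero order_trans)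
  ultimately show ?thesis unfolding E_def c_def by (meson mult_right_mono norm_ge_zero order_trans)
qed

lemma main_bound:
  fixes U W0 :: "complex^'n^'n"
  assumes U: "unitary_matrix U" and W0: "unitary_matrix W0" "bd d W0"
    and maxi: "\<And>W. unitary_matrix W \<Longrightarrow> bd d W \<Longrightarrow> Re (gs U W) \<le> Re (gs U W0)"
    and Eb: "\<And>x. norm ((U - Bm d U) *v x) \<le> e * norm x"
    and e0: "0 \<le> e"
  shows "norm ((U - W0) *v x) \<le> 2 * e * norm x"
proof -
  define B where "B = Bm d U"
  define P where "P = adjoint_matrix W0 ** B"
  have bdB: "bd d B" by (simp add: B_def bd_Bm)
  have bdP: "bd d P" unfolding P_def by (intro bd_mult bd_adj W0 bdB)
  have Eb': "norm (U *v y - B *v y) \<le> e * norm y" for y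
    using Eb[of y] by (simp add: B_def matrix_vector_mult_diff_rdistrib)
  have Bup: "norm (B *v y) \<le> (1 + e) * norm y" for y
  proof -
    have "norm (B *v y) \<le> norm (U *v y) + norm (U *v y - B *v y)"
      by (metis add.commute diff_add_cancel norm_triangle_ineq4 add_diff_cancel_left' norm_triangle_ineq2 order_trans norm_minus_commute)
    then show ?thesis using Eb'[of y] unitary_norm[OF U] by (simp add: algebra_simps)
  qed
  have Blo: "(1 - e) * norm y \<le> norm (B *v y)" for y
  proof -
    have "norm (U *v y) \<le> norm (B *v y) + norm (U *v y - B *v y)"
      by (metis add.commute diff_add_cancel norm_triangle_ineq)
    then show ?thesis using Eb'[of y] unitary_norm[OF U] by (simp add: algebra_simps)
  qed
  have Pv: "P *v y = adjoint_matrix W0 *v (B *v y)" for y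
    by (simp add: P_def matrix_vector_mul_assoc)
  have Pn: "norm (P *v y) = norm (B *v y)" for y
    unfolding Pv by (rule unitary_norm[OF unitary_adj[OF W0(1)]])
  have qform: "cinner y (P *v y) = cinner (W0 *v y) (U *v y)" if "y \<in> blk d k" for y k
  proof -
    have "cinner y (P *v y) = cinner (W0 *v y) (B *v y)" unfolding Pv cinner_adj by simp
    also have "\<dots> = cinner (W0 *v y) (U *v y) - cinner (W0 *v y) ((U - Bm d U) *v y)"
      by (simp add: B_def matrix_vector_mult_diff_rdistrib cinner_diff_right)
    also have "\<dots> = cinner (W0 *v y) (U *v y)" using orth_E[OF that W0(2)] by simp
    finally show ?thesis .
  qed
  have realpos: "Im (cinner y (P *v y)) = 0 \<and> 0 \<le> Re (cinner y (P *v y))" if yk: "y \<in> blk d k" for y k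
  proof (cases "y = 0")
    case True then show ?thesis by simp
  next
    case False
    define z where "z = cinner y (P *v y)"
    have "Re (cnj (w - 1) * z) \<le> 0" if w: "cmod w = 1" for w
    proof -
      define r where "r = (norm y)^2"
      have r0: "r > 0" using False by (simp add: r_def)
      define c where "c = (w - 1) / of_real r"
      have un: "unitary_matrix (W0 ** (mat 1 + outer c y y))"
        using unitary_mult[OF W0(1) unitary_pert[OF False w]] by (simp add: c_def r_def)
      have bdZ: "bd d (W0 ** (mat 1 + outer c y y))"
        by (intro bd_mult bd_add bd_one bd_outer[OF yk] W0)
      have "Re (gs U (W0 ** (mat 1 + outer c y y))) \<le> Re (gs U W0)" by (rule maxi[OF un bdZ])
      then have "Re (cnj c * z) \<le> 0"
        by (simp add: mult_pert gs_add gs_outer z_def qform[OF yk])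
      moreover have "cnj c * z = (cnj (w - 1) * z) / of_real r" by (simp add: c_def)
      ultimately have "Re (cnj (w - 1) * z) / r \<le> 0" by simp
      then show ?thesis using r0 by (simp add: divide_le_0_iff)
    qed
    then show ?thesis using complex_maxcond unfolding z_def by blast
  qed
  have symP: "inner y (P *v v) = inner v (P *v y)" if "y \<in> blk d k" "v \<in> blk d k" for y v k
  proof -
    have "Re (cinner y (P *v v)) = Re (cinner v (P *v y))"
      by (rule herm_from_real[where S = "blk d k"])
         (use realpos that in \<open>auto intro: blk_add blk_scale\<close>)
    then show ?thesis by (simp add: re_cinner)
  qed
  have loc: "norm ((P - mat 1) *v y) \<le> e * norm y" if "y \<in> blk d k" for y k
  proof -
    have "norm (P *v y - y) \<le> e * norm y"
    proof (rule core_spectral[where S = "blk d k" and p = "\<lambda>y. P *v y"])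
      show "linear (\<lambda>y. P *v y)" by simp
      show "closed (blk d k)" by (rule closed_blk)
    qed (use that symP realpos Pn Bup Blo in \<open>auto intro: blk_add blk_scaleR bd_blk[OF bdP] simp: re_cinner[symmetric]\<close>)
    then show ?thesis by (simp add: matrix_vector_mult_diff_rdistrib)
  qed
  have glued: "norm ((P - mat 1) *v y) \<le> e * norm y" for y
    by (rule glue[OF bd_diff[OF bdP bd_one] loc e0])
  have BW: "B = W0 ** P"
    using W0(1) by (simp add: P_def matrix_mul_assoc unitary_matrix_def)
  have "(U - W0) *v x = (U - B) *v x + W0 *v ((P - mat 1) *v x)"
    by (simp add: BW matrix_vector_mult_diff_rdistrib matrix_vector_mult_diff_distrib matrix_vector_mul_assoc)
  then have "norm ((U - W0) *v x) \<le> norm ((U - B) *v x) + norm (W0 *v ((P - mat 1) *v x))"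
    by (simp add: norm_triangle_ineq)
  also have "\<dots> \<le> e * norm x + e * norm x"
    using Eb[of x] glued[of x] unitary_norm[OF W0(1)] by (simp add: B_def add_mono)
  finally show ?thesis by simp
qed

theorem mainTheorem5:
  fixes D U :: "complex ^'n ^'n"
  assumes diag: "\<And>i j. i \<noteq> j \<Longrightarrow> D $ i $ j = 0"
    and posint: "\<And>i. \<exists>k::nat. k > 0 \<and> D $ i $ i = of_nat k"
    and unitO: "unitary_matrix U"
  shows "\<exists>V. unitary_matrix V \<and> commutator V D = 0 \<and>
           (\<forall>W. unitary_matrix W \<and> commutator W D = 0 \<longrightarrow> op_norm (U - V) \<le> op_norm (U - W)) \<and>
           op_norm (U - V) \<le> 2 * real CARD('n) * op_norm (commutator U D)"
proof -
  define d where "d = (\<lambda>i. D$i$i)"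
  define G where "G = {W::complex^'n^'n. unitary_matrix W \<and> bd d W}"
  define e where "e = real CARD('n) * op_norm (commutator U D)"
  have e0: "0 \<le> e" by (simp add: e_def op_norm_nonneg)
  have cG: "compact G" unfolding G_def by (rule compact_G)
  have neG: "G \<noteq> {}" using unitary_one bd_one unfolding G_def by blast
  have contg: "continuous_on G (\<lambda>W. Re (gs U W))"
    unfolding gs_def by (intro continuous_intros)
  obtain W0 where W0G: "W0 \<in> G" and W0max: "\<And>W. W \<in> G \<Longrightarrow> Re (gs U W) \<le> Re (gs U W0)"
    using continuous_attains_sup[OF cG neG contg] by blast
  have bound: "norm ((U - W0) *v x) \<le> 2 * e * norm x" for x
    by (rule main_bound[where d = d])
       (use W0G W0max unitO e0 E_bound[OF diag posint, of U] in \<open>auto simp: G_def d_def e_def\<close>)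
  have W0b: "op_norm (U - W0) \<le> 2 * e" by (rule op_norm_le[OF bound])
  obtain V where VG: "V \<in> G" and Vmin: "\<And>W. W \<in> G \<Longrightarrow> op_norm (U - V) \<le> op_norm (U - W)"
    using continuous_attains_inf[OF cG neG continuous_op_norm_diff[of G U]] by blast
  have commG: "commutator W D = 0 \<longleftrightarrow> bd d W" for W
    unfolding d_def by (rule comm_zero_iff[OF diag])
  show ?thesis
  proof (intro exI[of _ V] conjI allI impI)
    show "unitary_matrix V" using VG by (simp add: G_def)
    show "commutator V D = 0" using VG by (simp add: G_def commG)
    show "op_norm (U - V) \<le> op_norm (U - W)" if "unitary_matrix W \<and> commutator W D = 0" for W
      using that by (intro Vmin) (simp add: G_def commG)
    show "op_norm (U - V) \<le> 2 * real CARD('n) * op_norm (commutator U D)"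
      using Vmin[OF W0G] W0b by (simp add: e_def)
  qed
qed

end
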